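(* Let $Q$ be a quadrangulation with a strong labeling, with edges colored and oriented as induced by the labeling. If $v$ is a white (respectively black) vertex and $uv$ is an edge oriented towards $v$, then the outgoing edge at $v$ having the same color as $uv$ is the next outgoing edge to the right (respectively left) of $uv$, i.e. the first outgoing edge met when rotating around $v$ starting from $uv$ counterclockwise (respectively clockwise).
   Context: A quadrangulation is a simple plane graph with at least four vertices all of whose faces (including the outer face) are bounded by $4$-cycles; it is bipartite, and its vertices are properly colored black and white. An angle is an incidence of a vertex with a face. A strong labeling of $Q$ is a map from the angles of $Q$ to $\{0,1\}$ such that: (G0) the two black vertices on the outer face are named $s_0$ and $s_1$, and all angles at $s_i$ are labeled $i$; (G1) for each vertex $v\notin\{s_0,s_1\}$ the labels around $v$ form one non-empty cyclic interval of $1$s and one non-empty cyclic interval of $0$s; (G2) for each edge, the two labels on the two sides of the edge coincide at one endpoint and differ at the other; (G3) the labels in each bounded face, read cyclically, are $0,0,1,1$, and reading the labels of the outer face in clockwise order starting at $s_0$ they are $0,0,1,1$. The labeling induces a coloring and orientation of the edges: each edge is colored with the common label at the endpoint where its two labels coincide and is oriented towards that endpoint. *)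

theory Defs
  imports "HOL-Combinatorics.Permutations"
begin

text \<open>
Plane graphs are encoded as combinatorial maps (rotation systems).
D is a finite set of darts (half-edges); alpha is the fixed-point-free involution
sending a dart to its reverse; sigma is the counterclockwise rotation of darts
around their tail vertex. Vertices are sigma-orbits, edges are alpha-orbits,
faces are orbits of phi = sigma o alpha (phi walks a face keeping it on its right,
i.e. bounded faces clockwise, the outer face counterclockwise as drawn).
An angle (vertex-face incidence) is identified with a dart e: it is the corner at
the tail of e between (inv sigma) e and e; it lies in the face (phi-orbit) of e.
\<close>

definition orb :: "('d \<Rightarrow> 'd) \<Rightarrow> 'd \<Rightarrow> 'd set" where
  "orb f x = {(f ^^ n) x | n. True}"

definition comb_map :: "'d set \<Rightarrow> ('d \<Rightarrow> 'd) \<Rightarrow> ('d \<Rightarrow> 'd) \<Rightarrow> bool" where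
  "comb_map D \<sigma> \<alpha> \<longleftrightarrow> finite D \<and> \<sigma> permutes D \<and> \<alpha> permutes D \<and>
     (\<forall>d\<in>D. \<alpha> d \<noteq> d \<and> \<alpha> (\<alpha> d) = d)"

definition connected_map :: "'d set \<Rightarrow> ('d \<Rightarrow> 'd) \<Rightarrow> ('d \<Rightarrow> 'd) \<Rightarrow> bool" where
  "connected_map D \<sigma> \<alpha> \<longleftrightarrow>
     (\<forall>d\<in>D. \<forall>e\<in>D. (d, e) \<in> ({(x, \<sigma> x) | x. x \<in> D} \<union> {(x, \<alpha> x) | x. x \<in> D})\<^sup>*)"

text \<open>Connected genus-0 map (Euler's formula V + F = E + 2): a plane graph.\<close>
definition plane_map :: "'d set \<Rightarrow> ('d \<Rightarrow> 'd) \<Rightarrow> ('d \<Rightarrow> 'd) \<Rightarrow> bool" where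
  "plane_map D \<sigma> \<alpha> \<longleftrightarrow> comb_map D \<sigma> \<alpha> \<and> connected_map D \<sigma> \<alpha> \<and>
     card (orb \<sigma> ` D) + card (orb (\<sigma> \<circ> \<alpha>) ` D) = card (orb \<alpha> ` D) + 2"

definition simple_map :: "'d set \<Rightarrow> ('d \<Rightarrow> 'd) \<Rightarrow> ('d \<Rightarrow> 'd) \<Rightarrow> bool" where
  "simple_map D \<sigma> \<alpha> \<longleftrightarrow> (\<forall>d\<in>D. orb \<sigma> (\<alpha> d) \<noteq> orb \<sigma> d) \<and>
     (\<forall>d\<in>D. \<forall>e\<in>D. orb \<sigma> d = orb \<sigma> e \<and> orb \<sigma> (\<alpha> d) = orb \<sigma> (\<alpha> e) \<longrightarrow> d = e)"

definition quadrangulation :: "'d set \<Rightarrow> ('d \<Rightarrow> 'd) \<Rightarrow> ('d \<Rightarrow> 'd) \<Rightarrow> bool" where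
  "quadrangulation D \<sigma> \<alpha> \<longleftrightarrow> plane_map D \<sigma> \<alpha> \<and> simple_map D \<sigma> \<alpha> \<and>
     card (orb \<sigma> ` D) \<ge> 4 \<and>
     (\<forall>d\<in>D. card (orb (\<sigma> \<circ> \<alpha>) d) = 4 \<and> card (orb \<sigma> ` orb (\<sigma> \<circ> \<alpha>) d) = 4)"

definition proper_bw :: "'d set \<Rightarrow> ('d \<Rightarrow> 'd) \<Rightarrow> ('d \<Rightarrow> 'd) \<Rightarrow> ('d set \<Rightarrow> bool) \<Rightarrow> bool" where
  "proper_bw D \<sigma> \<alpha> black \<longleftrightarrow> (\<forall>d\<in>D. black (orb \<sigma> d) \<noteq> black (orb \<sigma> (\<alpha> d)))"

text \<open>Strong labeling; o is a dart of the outer face, s0 s1 the named black outer vertices,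
lab the labels of the angles (angles = darts).\<close>
definition strong_labeling ::
  "'d set \<Rightarrow> ('d \<Rightarrow> 'd) \<Rightarrow> ('d \<Rightarrow> 'd) \<Rightarrow> ('d set \<Rightarrow> bool) \<Rightarrow> 'd \<Rightarrow> 'd set \<Rightarrow> 'd set
     \<Rightarrow> ('d \<Rightarrow> nat) \<Rightarrow> bool" where
  "strong_labeling D \<sigma> \<alpha> black od s0 s1 lab \<longleftrightarrow>
     od \<in> D \<and> (\<forall>d\<in>D. lab d \<in> {0, 1}) \<and>
     \<comment> \<open>(G0)\<close>
     s0 \<noteq> s1 \<and> black s0 \<and> black s1 \<and>
     s0 \<in> orb \<sigma> ` orb (\<sigma> \<circ> \<alpha>) od \<and> s1 \<in> orb \<sigma> ` orb (\<sigma> \<circ> \<alpha>) od \<and>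
     (\<forall>d\<in>D. orb \<sigma> d = s0 \<longrightarrow> lab d = 0) \<and>
     (\<forall>d\<in>D. orb \<sigma> d = s1 \<longrightarrow> lab d = 1) \<and>
     \<comment> \<open>(G1): around v (ccw order) one non-empty interval of 1s and one of 0s\<close>
     (\<forall>d\<in>D. orb \<sigma> d \<notin> {s0, s1} \<longrightarrow>
        (\<exists>a\<in>orb \<sigma> d. \<exists>k. 0 < k \<and> k < card (orb \<sigma> d) \<and>
           (\<forall>i < card (orb \<sigma> d). lab ((\<sigma> ^^ i) a) = (if i < k then 1 else 0)))) \<and>
     \<comment> \<open>(G2): the angles beside the edge of d at its tail are d and sigma d\<close>
     (\<forall>d\<in>D. (lab d = lab (\<sigma> d)) \<noteq> (lab (\<alpha> d) = lab (\<sigma> (\<alpha> d)))) \<and>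
     \<comment> \<open>(G3) bounded faces: cyclically 0,0,1,1\<close>
     (\<forall>d\<in>D. orb (\<sigma> \<circ> \<alpha>) d \<noteq> orb (\<sigma> \<circ> \<alpha>) od \<longrightarrow>
        (\<exists>e\<in>orb (\<sigma> \<circ> \<alpha>) d. lab e = 0 \<and> lab ((\<sigma> \<circ> \<alpha>) e) = 0 \<and>
            lab (((\<sigma> \<circ> \<alpha>) ^^ 2) e) = 1 \<and> lab (((\<sigma> \<circ> \<alpha>) ^^ 3) e) = 1)) \<and>
     \<comment> \<open>(G3) outer face, clockwise (= inverse phi) from s0: 0,0,1,1\<close>
     (\<forall>e\<in>orb (\<sigma> \<circ> \<alpha>) od. orb \<sigma> e = s0 \<longrightarrow>
        lab e = 0 \<and> lab (inv (\<sigma> \<circ> \<alpha>) e) = 0 \<and>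
        lab ((inv (\<sigma> \<circ> \<alpha>) ^^ 2) e) = 1 \<and> lab ((inv (\<sigma> \<circ> \<alpha>) ^^ 3) e) = 1)"

text \<open>Induced orientation: the edge of dart d is oriented towards the tail of d iff the
two labels beside it at the tail of d coincide; its colour is that common label.\<close>
definition towards_tail :: "('d \<Rightarrow> 'd) \<Rightarrow> ('d \<Rightarrow> nat) \<Rightarrow> 'd \<Rightarrow> bool" where
  "towards_tail \<sigma> lab d \<longleftrightarrow> lab d = lab (\<sigma> d)"

definition outgoing :: "('d \<Rightarrow> 'd) \<Rightarrow> ('d \<Rightarrow> 'd) \<Rightarrow> ('d \<Rightarrow> nat) \<Rightarrow> 'd \<Rightarrow> bool" where
  "outgoing \<sigma> \<alpha> lab d \<longleftrightarrow> towards_tail \<sigma> lab (\<alpha> d)"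

definition ecolor :: "('d \<Rightarrow> 'd) \<Rightarrow> ('d \<Rightarrow> 'd) \<Rightarrow> ('d \<Rightarrow> nat) \<Rightarrow> 'd \<Rightarrow> nat" where
  "ecolor \<sigma> \<alpha> lab d = (if lab d = lab (\<sigma> d) then lab d else lab (\<alpha> d))"

definition first_out_same_color ::
  "('d \<Rightarrow> 'd) \<Rightarrow> ('d \<Rightarrow> 'd) \<Rightarrow> ('d \<Rightarrow> nat) \<Rightarrow> ('d \<Rightarrow> 'd) \<Rightarrow> 'd \<Rightarrow> bool" where
  "first_out_same_color \<sigma> \<alpha> lab r d \<longleftrightarrow>
     (\<exists>k > 0. outgoing \<sigma> \<alpha> lab ((r ^^ k) d) \<and>
        (\<forall>j. 0 < j \<and> j < k \<longrightarrow> \<not> outgoing \<sigma> \<alpha> lab ((r ^^ j) d)) \<and>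
        ecolor \<sigma> \<alpha> lab ((r ^^ k) d) = ecolor \<sigma> \<alpha> lab d \<and>
        (\<forall>e\<in>orb \<sigma> d. outgoing \<sigma> \<alpha> lab e \<and> ecolor \<sigma> \<alpha> lab e = ecolor \<sigma> \<alpha> lab d
            \<longrightarrow> e = (r ^^ k) d))"

end

theory Submission
  imports Defs "HOL-Combinatorics.Orbits"
begin

lemma orb_orbit: "permutation f \<Longrightarrow> orb f x = orbit f x"
  by (simp add: orb_def orbit_altdef_permutation)

lemma period:
  assumes "permutation f"
  shows "(f ^^ card (orb f y)) y = y" "orb f y = (\<lambda>n. (f ^^ n) y) ` {0..<card (orb f y)}"
    "0 < card (orb f y)"
proof -
  have s: "y \<in> orbit f y" using assms by (rule permutation_self_in_orbit)
  have o: "orb f y = (\<lambda>n. (f ^^ n) y) ` {0..<funpow_dist1 f y y}"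
    using orbit_conv_funpow_dist1[OF s] orb_orbit[OF assms] by simp
  have c: "card (orb f y) = funpow_dist1 f y y"
    using o inj_on_funpow_dist1[OF s] by (simp add: card_image)
  show "(f ^^ card (orb f y)) y = y" using c funpow_dist1_prop[OF s] by simp
  show "orb f y = (\<lambda>n. (f ^^ n) y) ` {0..<card (orb f y)}" using o c by simp
  show "0 < card (orb f y)" using c by simp
qed

lemma orb_eq:
  assumes "permutation f" "y \<in> orb f x" shows "orb f y = orb f x"
proof -
  have x: "x \<in> orbit f x" using assms(1) by (rule permutation_self_in_orbit)
  have y: "y \<in> orbit f x" using assms orb_orbit by metis
  have "x \<in> orbit f y" using orbit_swap[OF x y] .
  then have "orbit f y = orbit f x"
    using orbit_trans[of _ f y x] orbit_trans[of _ f x y] y by blast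
  then show ?thesis using orb_orbit[OF assms(1)] by simp
qed

lemma orb_self: "x \<in> orb f x"
  unfolding orb_def by (auto intro: exI[of _ 0])

lemma orb_funpow: "(f ^^ n) x \<in> orb f x"
  unfolding orb_def by auto

lemma funpow_back:
  assumes "(f ^^ 4) y = y" "x = (f ^^ k) y"
  shows "y = (f ^^ (3 * k)) x"
proof -
  have "(f ^^ (3*k)) x = (f ^^ (3*k + k)) y" unfolding assms(2) by (simp only: funpow_add comp_apply)
  also have "\<dots> = (f ^^ (4*k)) y" by (simp add: mult.commute)
  also have "\<dots> = y" using funpow_mod_eq[where f=f and n=4 and x=y and m="4*k"] assms(1) by simp
  finally show ?thesis by simp
qed

lemma face_rule:
  fixes lab :: "'d \<Rightarrow> nat"
  assumes p4: "(\<phi> ^^ 4) x = x"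
    and bin: "\<forall>i. lab ((\<phi> ^^ i) x) \<in> {0,1}"
    and pat: "lab x = lab (\<phi> x)" "lab (\<phi> x) \<noteq> lab ((\<phi> ^^ 2) x)" "lab ((\<phi> ^^ 2) x) = lab ((\<phi> ^^ 3) x)"
    and b: "b = (\<phi> ^^ j) x"
  shows "(lab ((\<phi> ^^ 3) b) = lab b) \<noteq> (lab b = lab (\<phi> b))"
proof -
  define L where "L i = lab ((\<phi> ^^ i) x)" for i
  have per: "L i = L (i mod 4)" for i unfolding L_def using funpow_mod_eq[where f="\<phi>" and n=4 and x=x and m=i] p4 by simp
  have b3: "(\<phi> ^^ 3) b = (\<phi> ^^ (j+3)) x" unfolding b by (simp only: add.commute[of j 3] funpow_add comp_apply)
  have b1: "\<phi> b = (\<phi> ^^ (Suc j)) x" using b by simp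
  have L0: "L 0 = L 1" "L 1 \<noteq> L 2" "L 2 = L 3" using pat unfolding L_def by auto
  have Lb: "L i \<in> {0,1}" for i using bin L_def by auto
  have e1: "L (j+3) = L ((j mod 4 + 3) mod 4)" using per[of "j+3"] by (simp add: mod_add_left_eq)
  have e2: "L j = L (j mod 4)" using per[of j] .
  have e3: "L (Suc j) = L ((j mod 4 + 1) mod 4)" using per[of "Suc j"] by (simp add: mod_Suc_eq)
  have B: "L 0 \<in> {0,1}" "L 1 \<in> {0,1}" "L 2 \<in> {0,1}" "L 3 \<in> {0,1}" using Lb by auto
  define u where "u = L 0"
  have u: "u \<in> {0,1}" "L 0 = u" "L 1 = u" "L 2 = 1 - u" "L 3 = 1 - u"
    using L0 B unfolding u_def by auto
  have u2: "L (Suc 0) = u" "L (Suc (Suc 0)) = 1 - u" "L (Suc (Suc (Suc 0))) = 1 - u"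
    using u by (simp_all add: numeral_2_eq_2 numeral_3_eq_3)
  have "j mod 4 < 4" by simp
  then have "j mod 4 = 0 \<or> j mod 4 = 1 \<or> j mod 4 = 2 \<or> j mod 4 = 3" by linarith
  then have "(L (j+3) = L j) \<noteq> (L j = L (Suc j))"
  proof (elim disjE)
    assume h: "j mod 4 = 0" show ?thesis unfolding e1 e2 e3 h using u u2 by auto
  next
    assume h: "j mod 4 = 1" show ?thesis unfolding e1 e2 e3 h using u u2 by auto
  next
    assume h: "j mod 4 = 2" show ?thesis unfolding e1 e2 e3 h using u u2 by auto
  next
    assume h: "j mod 4 = 3" show ?thesis unfolding e1 e2 e3 h using u u2 by auto
  qed
  then show ?thesis unfolding L_def using b b1 b3 by simp
qed

lemma funpow_in:
  assumes "p permutes S" "y \<in> S" shows "(p ^^ n) y \<in> S"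
  using assms by (induction n) (auto simp: permutes_in_image)

lemma inv_funpow:
  fixes p :: "'a \<Rightarrow> 'a"
  assumes "bij p" shows "(inv p ^^ m) ((p ^^ m) y) = y"
proof (induction m)
  case (Suc m)
  have "(inv p ^^ Suc m) ((p ^^ Suc m) y) = (inv p ^^ m) (inv p (p ((p ^^ m) y)))"
    by (metis comp_apply funpow_Suc_right funpow.simps(2))
  also have "\<dots> = (inv p ^^ m) ((p ^^ m) y)" using assms by (simp add: bij_is_inj)
  finally show ?case using Suc by simp
qed simp

lemma orb_sub:
  assumes "permutation f" "y \<in> orb f x" shows "(f ^^ n) y \<in> orb f x"
proof -
  from assms(2) obtain m where "y = (f ^^ m) x" unfolding orb_def by auto
  then have "(f ^^ n) y = (f ^^ (n + m)) x" by (simp add: funpow_add)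
  then show ?thesis by (simp add: orb_funpow)
qed

lemma inv_in_orb:
  assumes "permutation f" shows "inv f z \<in> orb f z"
proof -
  define N where "N = card (orb f z)"
  have N: "(f ^^ N) z = z" "0 < N" using period[OF assms] N_def by auto
  have b: "bij f" using assms by (simp add: permutation_bijective)
  have "inv f z = inv f (f ((f ^^ (N - 1)) z))"
    using N by (metis Suc_pred' funpow.simps(2) comp_apply)
  also have "\<dots> = (f ^^ (N - 1)) z" using b by (simp add: bij_is_inj)
  finally show ?thesis by (simp add: orb_funpow)
qed

theorem lemma11:
  fixes D :: "'d set" and \<sigma> \<alpha> :: "'d \<Rightarrow> 'd" and black :: "'d set \<Rightarrow> bool"
    and od :: 'd and s0 s1 :: "'d set" and lab :: "'d \<Rightarrow> nat" and d :: 'd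
  assumes "quadrangulation D \<sigma> \<alpha>"
    and "proper_bw D \<sigma> \<alpha> black"
    and "strong_labeling D \<sigma> \<alpha> black od s0 s1 lab"
    and "d \<in> D"
    and "towards_tail \<sigma> lab d"
    and "orb \<sigma> d \<notin> {s0, s1}"
  shows "(\<not> black (orb \<sigma> d) \<longrightarrow> first_out_same_color \<sigma> \<alpha> lab \<sigma> d) \<and>
         (black (orb \<sigma> d) \<longrightarrow> first_out_same_color \<sigma> \<alpha> lab (inv \<sigma>) d)"
proof -
  define \<phi> where "\<phi> = \<sigma> \<circ> \<alpha>"
  have phi_app: "\<phi> x = \<sigma> (\<alpha> x)" for x by (simp add: \<phi>_def)
  from assms(1) have fin: "finite D" and sp: "\<sigma> permutes D" and ap: "\<alpha> permutes D"
    and ainv: "\<forall>d\<in>D. \<alpha> (\<alpha> d) = d" and conn: "connected_map D \<sigma> \<alpha>"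
    and face4: "\<forall>d\<in>D. card (orb \<phi> d) = 4"
    unfolding quadrangulation_def plane_map_def comb_map_def \<phi>_def by auto
  have php: "\<phi> permutes D" unfolding \<phi>_def by (rule permutes_compose[OF ap sp])
  have perm_s: "permutation \<sigma>" using fin sp permutation_permutes by blast
  have perm_phi: "permutation \<phi>" using fin php permutation_permutes by blast
  have bw: "\<forall>d\<in>D. black (orb \<sigma> d) \<noteq> black (orb \<sigma> (\<alpha> d))"
    using assms(2) unfolding proper_bw_def by auto
  from assms(3) have odD: "od \<in> D" and bin: "\<forall>d\<in>D. lab d \<in> {0, 1}"
    and bs0: "black s0"
    and s0o: "s0 \<in> orb \<sigma> ` orb \<phi> od"
    and G1: "\<forall>d\<in>D. orb \<sigma> d \<notin> {s0, s1} \<longrightarrow>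
        (\<exists>a\<in>orb \<sigma> d. \<exists>k. 0 < k \<and> k < card (orb \<sigma> d) \<and>
           (\<forall>i < card (orb \<sigma> d). lab ((\<sigma> ^^ i) a) = (if i < k then 1 else 0)))"
    and G2: "\<forall>d\<in>D. (lab d = lab (\<sigma> d)) \<noteq> (lab (\<alpha> d) = lab (\<sigma> (\<alpha> d)))"
    and G3b: "\<forall>d\<in>D. orb \<phi> d \<noteq> orb \<phi> od \<longrightarrow>
        (\<exists>e\<in>orb \<phi> d. lab e = 0 \<and> lab (\<phi> e) = 0 \<and>
            lab ((\<phi> ^^ 2) e) = 1 \<and> lab ((\<phi> ^^ 3) e) = 1)"
    and G3o: "\<forall>e\<in>orb \<phi> od. orb \<sigma> e = s0 \<longrightarrow>
        lab e = 0 \<and> lab (inv \<phi> e) = 0 \<and>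
        lab ((inv \<phi> ^^ 2) e) = 1 \<and> lab ((inv \<phi> ^^ 3) e) = 1"
    unfolding strong_labeling_def \<phi>_def by auto
  have sD: "\<sigma> x \<in> D" if "x \<in> D" for x using sp that by (simp add: permutes_in_image)
  have aD: "\<alpha> x \<in> D" if "x \<in> D" for x using ap that by (simp add: permutes_in_image)
  have pD: "\<phi> x \<in> D" if "x \<in> D" for x using php that by (simp add: permutes_in_image)
  have orbD: "y \<in> D" if "y \<in> orb \<phi> x" "x \<in> D" for x y
    using that funpow_in[OF php] unfolding orb_def by auto
  have orbsD: "y \<in> D" if "y \<in> orb \<sigma> x" "x \<in> D" for x y
    using that funpow_in[OF sp] unfolding orb_def by auto
  have phi4: "(\<phi> ^^ 4) y = y" if "y \<in> D" for y
    using period(1)[OF perm_phi, of y] face4 that by simp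
  have invphi: "inv \<phi> y = (\<phi> ^^ 3) y" if "y \<in> D" for y
  proof -
    have "\<phi> ((\<phi> ^^ 3) y) = y" using phi4[OF that] by (simp add: eval_nat_numeral)
    then have "inv \<phi> y = inv \<phi> (\<phi> ((\<phi> ^^ 3) y))" by simp
    also have "\<dots> = (\<phi> ^^ 3) y" using permutes_inverses(2)[OF php] by simp
    finally show ?thesis .
  qed
  have invphik: "(inv \<phi> ^^ k) y = (\<phi> ^^ (3 * k)) y" if "y \<in> D" for y k
  proof (induction k)
    case (Suc k)
    have "(inv \<phi> ^^ Suc k) y = inv \<phi> ((\<phi> ^^ (3 * k)) y)" using Suc by simp
    also have "\<dots> = (\<phi> ^^ 3) ((\<phi> ^^ (3 * k)) y)" using invphi funpow_in[OF php that] by simp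
    also have "\<dots> = (\<phi> ^^ (3 + 3 * k)) y" by (simp only: funpow_add comp_apply)
    also have "3 + 3 * k = 3 * Suc k" by simp
    finally show ?case .
  qed simp
  have phimod: "(\<phi> ^^ k) y = (\<phi> ^^ (k mod 4)) y" if "y \<in> D" for y k
    using funpow_mod_eq[where f=\<phi> and n=4 and x=y and m=k] phi4[OF that] by simp
  have FR: "(lab (inv \<phi> b) = lab b) \<noteq> (lab b = lab (\<phi> b))" if bD: "b \<in> D" for b
  proof -
    have "\<exists>x j. x \<in> D \<and> lab x = lab (\<phi> x) \<and> lab (\<phi> x) \<noteq> lab ((\<phi> ^^ 2) x) \<and>
       lab ((\<phi> ^^ 2) x) = lab ((\<phi> ^^ 3) x) \<and> b = (\<phi> ^^ j) x"
    proof (cases "orb \<phi> b = orb \<phi> od")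
      case True
      obtain e where e: "e \<in> orb \<phi> od" "orb \<sigma> e = s0" using s0o by auto
      have eD: "e \<in> D" using orbD[OF e(1) odD] .
      have LL: "lab e = 0 \<and> lab (inv \<phi> e) = 0 \<and> lab ((inv \<phi> ^^ 2) e) = 1 \<and> lab ((inv \<phi> ^^ 3) e) = 1"
        using G3o e(1) e(2) by blast
      have i2: "(inv \<phi> ^^ 2) e = (\<phi> ^^ 2) e"
        using invphik[OF eD, of 2] phimod[OF eD, of 6] by simp
      have i3: "(inv \<phi> ^^ 3) e = \<phi> e"
        using invphik[OF eD, of 3] phimod[OF eD, of 9] by simp
      have L: "lab e = 0" "lab ((\<phi> ^^ 3) e) = 0" "lab ((\<phi> ^^ 2) e) = 1" "lab (\<phi> e) = 1"
        using LL i2 i3 invphi[OF eD] by auto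
      define x where "x = \<phi> e"
      have xD: "x \<in> D" using pD[OF eD] x_def by simp
      have x2: "(\<phi> ^^ 2) x = (\<phi> ^^ 3) e" "(\<phi> ^^ 3) x = e" "\<phi> x = (\<phi> ^^ 2) e"
        using phi4[OF eD] unfolding x_def by (simp_all add: eval_nat_numeral)
      have "x \<in> orb \<phi> od" using orb_sub[OF perm_phi e(1), of 1] x_def by simp
      then have "x \<in> orb \<phi> b" using True by simp
      then obtain k where "x = (\<phi> ^^ k) b" unfolding orb_def by auto
      then have "b = (\<phi> ^^ (3 * k)) x" by (rule funpow_back[OF phi4[OF bD]])
      then show ?thesis using xD L x2 by (intro exI[of _ x] exI[of _ "3 * k"]) (simp add: x_def)
    next
      case False
      then obtain e where e: "e \<in> orb \<phi> b" "lab e = 0" "lab (\<phi> e) = 0"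
        "lab ((\<phi> ^^ 2) e) = 1" "lab ((\<phi> ^^ 3) e) = 1" using G3b bD by blast
      obtain k where "e = (\<phi> ^^ k) b" using e(1) unfolding orb_def by auto
      then have "b = (\<phi> ^^ (3 * k)) e" by (rule funpow_back[OF phi4[OF bD]])
      then show ?thesis using e orbD[OF e(1) bD] by (intro exI[of _ e] exI[of _ "3 * k"]) simp
    qed
    then obtain x j where x: "x \<in> D" "lab x = lab (\<phi> x)" "lab (\<phi> x) \<noteq> lab ((\<phi> ^^ 2) x)"
       "lab ((\<phi> ^^ 2) x) = lab ((\<phi> ^^ 3) x)" "b = (\<phi> ^^ j) x" by blast
    have "(lab ((\<phi> ^^ 3) b) = lab b) \<noteq> (lab b = lab (\<phi> b))"
      using face_rule[OF phi4[OF x(1)] _ x(2-5)] bin funpow_in[OF php x(1)] by blast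
    then show ?thesis using invphi[OF bD] by simp
  qed

  have G2alg: "(lab a = lab (\<phi> a)) = (lab (\<alpha> a) \<noteq> lab (\<sigma> a))" if aDD: "a \<in> D" for a
  proof -
    have "lab a \<in> {0,1}" "lab (\<sigma> a) \<in> {0,1}" "lab (\<alpha> a) \<in> {0,1}" "lab (\<phi> a) \<in> {0,1}"
      using bin aDD sD[OF aDD] aD[OF aDD] pD[OF aDD] by auto
    then show ?thesis using G2 aDD unfolding phi_app by auto
  qed
  define P where "P a \<longleftrightarrow> ((lab a = lab (\<phi> a)) = (\<not> black (orb \<sigma> a)))" for a
  have Palpha: "P (\<alpha> a) = P a" if aD: "a \<in> D" for a
  proof -
    have "\<phi> (\<alpha> a) = \<sigma> a" using ainv aD phi_app by simp
    then show ?thesis using G2alg[OF aD] bw aD unfolding P_def by auto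
  qed
  have orbs_eq: "orb \<sigma> y = orb \<sigma> x" if "y \<in> orb \<sigma> x" for x y
    using orb_eq[OF perm_s that] .
  have Psigma: "P (\<sigma> a) = P a" if aD: "a \<in> D" for a
  proof -
    have o: "orb \<sigma> (\<sigma> a) = orb \<sigma> a"
      using orbs_eq orb_funpow[where f="\<sigma>" and n=1 and x=a] by simp
    have "\<phi> (\<alpha> a) = \<sigma> a" using ainv aD phi_app by simp
    then have i: "inv \<phi> (\<sigma> a) = \<alpha> a" using permutes_inverses(2)[OF php] by metis
    show ?thesis using FR[OF sD[OF aD]] i G2alg[OF aD] o unfolding P_def by auto
  qed
  obtain e where e: "e \<in> orb \<phi> od" "orb \<sigma> e = s0" using s0o by auto
  have eD: "e \<in> D" using orbD[OF e(1) odD] .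
  have Pe: "P e"
  proof -
    have "lab e = 0" "lab (inv \<phi> e) = 0" using G3o e by blast+
    then show ?thesis using FR[OF eD] e(2) bs0 unfolding P_def by auto
  qed
  have Pall: "P a" if aD: "a \<in> D" for a
  proof -
    have "(e, a) \<in> ({(x, \<sigma> x) | x. x \<in> D} \<union> {(x, \<alpha> x) | x. x \<in> D})\<^sup>*"
      using conn eD aD unfolding connected_map_def by blast
    then show ?thesis
    proof (induction rule: rtrancl_induct)
      case base then show ?case using Pe .
    next
      case (step y z)
      then show ?case using Psigma Palpha by auto
    qed
  qed
  have out_iff: "outgoing \<sigma> \<alpha> lab y \<longleftrightarrow> lab y \<noteq> lab (\<sigma> y)" if "y \<in> D" for y
    using G2 that unfolding outgoing_def towards_tail_def by auto
  have ecol_out: "ecolor \<sigma> \<alpha> lab y = lab (\<phi> y)" if "y \<in> D" "outgoing \<sigma> \<alpha> lab y" for y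
    using G2 that unfolding outgoing_def towards_tail_def ecolor_def phi_app by auto
  define c where "c = lab d"
  have c1: "lab (\<sigma> d) = c" using assms(5) unfolding towards_tail_def c_def by simp
  have ecd: "ecolor \<sigma> \<alpha> lab d = c" using assms(5) unfolding towards_tail_def ecolor_def c_def by simp
  define n where "n = card (orb \<sigma> d)"
  obtain a k0 where a: "a \<in> orb \<sigma> d" and k0: "0 < k0" "k0 < n"
    and labA: "\<forall>i < n. lab ((\<sigma> ^^ i) a) = (if i < k0 then 1 else 0)"
    using G1 assms(4) assms(6) unfolding n_def by blast
  have oa: "orb \<sigma> a = orb \<sigma> d" using orbs_eq[OF a] .
  have na: "(\<sigma> ^^ n) a = a" using period(1)[OF perm_s, of a] oa n_def by simp
  have aD': "a \<in> D" using orbsD[OF a assms(4)] .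
  have idx: "x = (\<sigma> ^^ (if lab x = 1 then k0 - 1 else n - 1)) a"
    if x: "x \<in> orb \<sigma> d" "lab x \<noteq> lab (\<sigma> x)" for x
  proof -
    have pa: "orb \<sigma> a = (\<lambda>m. (\<sigma> ^^ m) a) ` {0..<n}"
      using period(2)[OF perm_s, of a] oa unfolding n_def by simp
    have "x \<in> (\<lambda>m. (\<sigma> ^^ m) a) ` {0..<n}" using x(1) oa pa by simp
    then obtain i where i: "i < n" "x = (\<sigma> ^^ i) a" by auto
    have lx: "lab x = (if i < k0 then 1 else 0)" using labA i by simp
    have sx: "\<sigma> x = (\<sigma> ^^ Suc i) a" using i by simp
    have ls: "lab (\<sigma> x) = (if Suc i < k0 then 1 else 0)" if "Suc i < n"
      using labA[rule_format, of "Suc i"] that sx by simp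
    have ls2: "lab (\<sigma> x) = 1" if "Suc i = n"
    proof -
      have "\<sigma> x = a" using sx that na by simp
      moreover have "lab a = 1" using labA[rule_format, of 0] k0 by simp
      ultimately show ?thesis by simp
    qed
    have "i = (if lab x = 1 then k0 - 1 else n - 1)"
    proof (cases "Suc i < n")
      case True then show ?thesis using ls lx x(2) k0 by (auto split: if_splits)
    next
      case False then have "Suc i = n" using i by simp
      then show ?thesis using ls2 lx x(2) k0 by (auto split: if_splits)
    qed
    then show ?thesis using i by simp
  qed
  have binD: "lab y \<in> {0,1}" if "y \<in> D" for y using bin that by auto
  have U: "x = y" if "x \<in> orb \<sigma> d" "y \<in> orb \<sigma> d" "lab x \<noteq> lab (\<sigma> x)" "lab y \<noteq> lab (\<sigma> y)"
    "lab x = lab y" for x y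
    using idx[of x] idx[of y] that by simp
  have inorbD: "y \<in> D" if "y \<in> orb \<sigma> d" for y using orbsD[OF that assms(4)] .
  have inorb_col: "orb \<sigma> y = orb \<sigma> d" if "y \<in> orb \<sigma> d" for y using orbs_eq[OF that] .
  obtain y where y: "y \<in> orb \<sigma> d" "lab y \<noteq> c"
  proof -
    have "lab a = 1" using labA k0 by (metis funpow_0 gr_implies_not0 less_trans)
    moreover have "lab ((\<sigma> ^^ (n - 1)) a) = 0" using labA k0 by simp
    moreover have "a \<in> orb \<sigma> d" "(\<sigma> ^^ (n - 1)) a \<in> orb \<sigma> d" using a orb_sub[OF perm_s a] by auto
    ultimately show ?thesis using that by (metis zero_neq_one)
  qed
  have part1: "first_out_same_color \<sigma> \<alpha> lab \<sigma> d" if white: "\<not> black (orb \<sigma> d)"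
  proof -
    define s where "s j = lab ((\<sigma> ^^ j) d)" for j
    obtain m where m: "y = (\<sigma> ^^ m) d" using y(1) unfolding orb_def by auto
    have m0: "m \<noteq> 0" using m y(2) c_def by (cases m) auto
    have s1: "s 1 = c" unfolding s_def using c1 by simp
    have ex: "\<exists>j. 1 \<le> j \<and> s j \<noteq> s (Suc j)"
    proof (rule ccontr)
      assume "\<not> ?thesis"
      then have st: "\<forall>j. 1 \<le> j \<longrightarrow> s j = s (Suc j)" by blast
      have "s j = c" if "1 \<le> j" for j
        using that
      proof (induction j)
        case (Suc j)
        show ?case
        proof (cases "j = 0")
          case True then show ?thesis using s1 by simp
        next
          case False
          then have "s j = c" using Suc by simp
          moreover have "s j = s (Suc j)" using st[rule_format, of j] False by simp
          ultimately show ?thesis by simp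
        qed
      qed simp
      then have "s m = c" using m0 by simp
      then show False using m y(2) unfolding s_def by simp
    qed
    define k where "k = (LEAST j. 1 \<le> j \<and> s j \<noteq> s (Suc j))"
    have k: "1 \<le> k" "s k \<noteq> s (Suc k)" using LeastI_ex[OF ex] unfolding k_def by auto
    have kmin: "s j = s (Suc j)" if "1 \<le> j" "j < k" for j
      using not_less_Least[of j "\<lambda>j. 1 \<le> j \<and> s j \<noteq> s (Suc j)"] that unfolding k_def by auto
    have allc: "s j = c" if "1 \<le> j" "j \<le> k" for j
      using that
    proof (induction j)
      case (Suc j)
      show ?case
      proof (cases "j = 0")
        case True then show ?thesis using s1 by simp
      next
        case False
        then have "s j = c" using Suc by simp
        moreover have "s j = s (Suc j)" using kmin[of j] False Suc.prems by simp
        ultimately show ?thesis by simp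
      qed
    qed simp
    define z where "z = (\<sigma> ^^ k) d"
    have zo: "z \<in> orb \<sigma> d" unfolding z_def by (rule orb_funpow)
    have zD: "z \<in> D" using inorbD[OF zo] .
    have zs: "\<sigma> z = (\<sigma> ^^ Suc k) d" unfolding z_def by simp
    have sk: "s k = lab z" "s (Suc k) = lab (\<sigma> z)" unfolding s_def z_def by simp_all
    have zout: "outgoing \<sigma> \<alpha> lab z" using out_iff[OF zD] k(2) sk by simp
    have zc: "lab z = c" using allc[of k] k sk by simp
    have Pz: "lab z = lab (\<phi> z)" using Pall[OF zD] inorb_col[OF zo] white unfolding P_def by simp
    have zec: "ecolor \<sigma> \<alpha> lab z = c" using ecol_out[OF zD zout] Pz zc by simp
    have C: "\<forall>j. 0 < j \<and> j < k \<longrightarrow> \<not> outgoing \<sigma> \<alpha> lab ((\<sigma> ^^ j) d)"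
    proof (intro allI impI)
      fix j assume j: "0 < j \<and> j < k"
      have "(\<sigma> ^^ j) d \<in> D" using inorbD orb_funpow by metis
      then show "\<not> outgoing \<sigma> \<alpha> lab ((\<sigma> ^^ j) d)"
        using out_iff kmin[of j] j unfolding s_def by simp
    qed
    have F: "\<forall>x\<in>orb \<sigma> d. outgoing \<sigma> \<alpha> lab x \<and> ecolor \<sigma> \<alpha> lab x = ecolor \<sigma> \<alpha> lab d
            \<longrightarrow> x = (\<sigma> ^^ k) d"
    proof (intro ballI impI)
      fix x assume xo: "x \<in> orb \<sigma> d" and xh: "outgoing \<sigma> \<alpha> lab x \<and> ecolor \<sigma> \<alpha> lab x = ecolor \<sigma> \<alpha> lab d"
      have xD: "x \<in> D" using inorbD[OF xo] .
      have Px: "lab x = lab (\<phi> x)" using Pall[OF xD] inorb_col[OF xo] white unfolding P_def by simp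
      have "lab x = c" using ecol_out[OF xD] xh Px ecd by simp
      moreover have "lab x \<noteq> lab (\<sigma> x)" using out_iff[OF xD] xh by simp
      moreover have "lab z \<noteq> lab (\<sigma> z)" using out_iff[OF zD] zout by simp
      ultimately have "x = z" using U[OF xo zo] zc by simp
      then show "x = (\<sigma> ^^ k) d" unfolding z_def .
    qed
    show ?thesis unfolding first_out_same_color_def
      using k(1) zout C zec ecd F unfolding z_def by (intro exI[of _ k]) auto
  qed
  have part2: "first_out_same_color \<sigma> \<alpha> lab (inv \<sigma>) d" if blk: "black (orb \<sigma> d)"
  proof -
    have isp: "inv \<sigma> permutes D" using permutes_inv[OF sp] .
    have bs: "bij \<sigma>" using permutes_bij[OF sp] .
    define t where "t j = lab ((inv \<sigma> ^^ j) d)" for j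
    have sinv: "\<sigma> ((inv \<sigma> ^^ Suc j) d) = (inv \<sigma> ^^ j) d" for j
      using permutes_inverses(1)[OF sp] by simp
    have io: "(inv \<sigma> ^^ j) d \<in> orb \<sigma> d" for j
    proof (induction j)
      case 0 then show ?case using orb_self by simp
    next
      case (Suc j)
      have "inv \<sigma> ((inv \<sigma> ^^ j) d) \<in> orb \<sigma> ((inv \<sigma> ^^ j) d)" using inv_in_orb[OF perm_s] .
      then show ?case using inorb_col[OF Suc] by simp
    qed
    have "d \<in> orb \<sigma> y" using inorb_col[OF y(1)] orb_self by metis
    then obtain m where m: "d = (\<sigma> ^^ m) y" unfolding orb_def by auto
    have ym: "(inv \<sigma> ^^ m) d = y" using m inv_funpow[OF bs] by simp
    have t0: "t 0 = c" using c_def t_def by simp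
    have ex: "\<exists>j. t (Suc j) \<noteq> t j"
    proof (rule ccontr)
      assume "\<not> ?thesis"
      then have st: "\<forall>j. t (Suc j) = t j" by blast
      have "t j = c" for j
      proof (induction j)
        case (Suc j) then show ?case using st[rule_format, of j] by simp
      qed (use t0 in simp)
      then show False using ym y(2) t_def by metis
    qed
    define k where "k = (LEAST j. t (Suc j) \<noteq> t j)"
    have k: "t (Suc k) \<noteq> t k" using LeastI_ex[OF ex] unfolding k_def by auto
    have kmin: "t (Suc j) = t j" if "j < k" for j
      using not_less_Least[of j "\<lambda>j. t (Suc j) \<noteq> t j"] that unfolding k_def by auto
    have allc: "t j = c" if "j \<le> k" for j
      using that
    proof (induction j)
      case (Suc j) then show ?case using kmin[of j] by simp
    qed (use t0 in simp)
    define z where "z = (inv \<sigma> ^^ Suc k) d"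
    have zo: "z \<in> orb \<sigma> d" unfolding z_def by (rule io)
    have zD: "z \<in> D" using inorbD[OF zo] .
    have zs: "\<sigma> z = (inv \<sigma> ^^ k) d" unfolding z_def by (rule sinv)
    have zout: "outgoing \<sigma> \<alpha> lab z" using out_iff[OF zD] k zs unfolding t_def z_def by simp
    have zc: "lab (\<sigma> z) = c" using allc[of k] zs unfolding t_def by simp
    have Pz: "lab z \<noteq> lab (\<phi> z)" using Pall[OF zD] inorb_col[OF zo] blk unfolding P_def by simp
    have zec: "ecolor \<sigma> \<alpha> lab z = c"
      using ecol_out[OF zD zout] Pz zc out_iff[OF zD] zout binD[OF zD] binD[OF sD[OF zD]] binD[OF pD[OF zD]]
      by auto
    have C: "\<forall>j. 0 < j \<and> j < Suc k \<longrightarrow> \<not> outgoing \<sigma> \<alpha> lab ((inv \<sigma> ^^ j) d)"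
    proof (intro allI impI)
      fix j assume j: "0 < j \<and> j < Suc k"
      then obtain j' where j': "j = Suc j'" "j' < k" by (cases j) auto
      have "(inv \<sigma> ^^ j) d \<in> D" using inorbD io by metis
      then show "\<not> outgoing \<sigma> \<alpha> lab ((inv \<sigma> ^^ j) d)"
        using out_iff kmin[of j'] j' sinv[of j'] unfolding t_def by simp
    qed
    have F: "\<forall>x\<in>orb \<sigma> d. outgoing \<sigma> \<alpha> lab x \<and> ecolor \<sigma> \<alpha> lab x = ecolor \<sigma> \<alpha> lab d
            \<longrightarrow> x = (inv \<sigma> ^^ Suc k) d"
    proof (intro ballI impI)
      fix x assume xo: "x \<in> orb \<sigma> d" and xh: "outgoing \<sigma> \<alpha> lab x \<and> ecolor \<sigma> \<alpha> lab x = ecolor \<sigma> \<alpha> lab d"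
      have xD: "x \<in> D" using inorbD[OF xo] .
      have Px: "lab x \<noteq> lab (\<phi> x)" using Pall[OF xD] inorb_col[OF xo] blk unfolding P_def by simp
      have "lab (\<phi> x) = c" using ecol_out[OF xD] xh ecd by simp
      then have lx: "lab x \<noteq> c" using Px by simp
      have lz: "lab z \<noteq> c" using zc out_iff[OF zD] zout by simp
      have "lab x = lab z" using lx lz binD[OF xD] binD[OF zD] binD[OF assms(4)] c_def by auto
      moreover have "lab x \<noteq> lab (\<sigma> x)" using out_iff[OF xD] xh by simp
      moreover have "lab z \<noteq> lab (\<sigma> z)" using out_iff[OF zD] zout by simp
      ultimately have "x = z" using U[OF xo zo] by simp
      then show "x = (inv \<sigma> ^^ Suc k) d" unfolding z_def .
    qed
    show ?thesis unfolding first_out_same_color_def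
      using zout C zec ecd F unfolding z_def by (intro exI[of _ "Suc k"]) auto
  qed
  show ?thesis using part1 part2 by blast
qed
end
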